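(* Let $b\ge1$ and let $A\subseteq\mathbb{N}$ be a nonempty finite set, and let $f\in\mathcal{M}^b$ be the multiset with set-array representation $(A,\emptyset,\ldots,\emptyset)$ (i.e. $f$ is the indicator function of $A$). Then \[d(f)=\sum_{B\text{ divisor of }A}b^{|B|}.\]
   Context: $\mathbb{N}=\{0,1,\ldots\}$. A set $B\subseteq\mathbb{N}$ is a divisor of $A$ if $B+C=A$ for some $C\subseteq\mathbb{N}$, where $S+T=\{s+t:s\in S,t\in T\}$. $\mathcal{M}^b$ is the set of finitely supported functions $f:\mathbb{N}\to\{0,\ldots,b\}$; its set-array representation is $(A_1,\ldots,A_b)$ with $A_i=\{a:f(a)\ge i\}$. Multiset addition is coordinatewise on set arrays, with $S+\emptyset=\emptyset$. $g\in\mathcal{M}^b$ is a divisor of $f$ if $f=g+h$ for some $h\in\mathcal{M}^b$, and $d(f)$ is the number of divisors of $f$. *)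

theory Defs
  imports Main
begin

definition sumset :: "nat set \<Rightarrow> nat set \<Rightarrow> nat set" where
  "sumset S T = {s + t | s t. s \<in> S \<and> t \<in> T}"

definition set_divisor :: "nat set \<Rightarrow> nat set \<Rightarrow> bool" where
  "set_divisor B A \<longleftrightarrow> (\<exists>C. sumset B C = A)"

definition Mb :: "nat \<Rightarrow> (nat \<Rightarrow> nat) set" where
  "Mb b = {f. finite {a. f a \<noteq> 0} \<and> (\<forall>a. f a \<le> b)}"

definition setarr :: "(nat \<Rightarrow> nat) \<Rightarrow> nat \<Rightarrow> nat set" where
  "setarr f i = {a. f a \<ge> i}"

text \<open>Multiset addition is coordinatewise sumset on set arrays; g divides f in M^b
  iff f = g + h for some h in M^b.\<close>
definition mdivisor :: "nat \<Rightarrow> (nat \<Rightarrow> nat) \<Rightarrow> (nat \<Rightarrow> nat) \<Rightarrow> bool" where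
  "mdivisor b g f \<longleftrightarrow> g \<in> Mb b \<and>
     (\<exists>h \<in> Mb b. \<forall>i \<in> {1..b}. setarr f i = sumset (setarr g i) (setarr h i))"

definition num_divisors :: "nat \<Rightarrow> (nat \<Rightarrow> nat) \<Rightarrow> nat" where
  "num_divisors b f = card {g. mdivisor b g f}"

end

theory Submission
  imports Defs "HOL-Library.FuncSet"
begin

lemma sumset_empty2[simp]: "sumset S {} = {}" by (simp add: sumset_def)
lemma sumset_empty1[simp]: "sumset {} S = {}" by (simp add: sumset_def)

lemma divisor_bound:
  assumes "sumset B C = A" "finite A" "A \<noteq> {}"
  shows "B \<subseteq> {..Max A}" "C \<subseteq> {..Max A}"
proof -
  have "B \<noteq> {}" "C \<noteq> {}" using assms by auto
  then obtain b c where bc: "b \<in> B" "c \<in> C" by auto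
  show "B \<subseteq> {..Max A}"
  proof
    fix x assume "x \<in> B"
    then have "x + c \<in> A" using assms(1) bc unfolding sumset_def by blast
    then have "x + c \<le> Max A" using assms(2) by simp
    then show "x \<in> {..Max A}" by simp
  qed
  show "C \<subseteq> {..Max A}"
  proof
    fix x assume "x \<in> C"
    then have "b + x \<in> A" using assms(1) bc unfolding sumset_def by blast
    then have "b + x \<le> Max A" using assms(2) by simp
    then show "x \<in> {..Max A}" by simp
  qed
qed

lemma mdiv_char:
  fixes b :: nat and A :: "nat set"
  assumes "b \<ge> 1" and "finite A" and "A \<noteq> {}"
  shows "mdivisor b g (\<lambda>a. if a \<in> A then 1 else 0) \<longleftrightarrow>
     (\<forall>a. g a \<le> b) \<and> set_divisor {a. g a \<noteq> 0} A"
proof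
  assume m: "mdivisor b g (\<lambda>a. if a \<in> A then 1 else 0)"
  then obtain h where "h \<in> Mb b" and hh: "\<forall>i \<in> {1..b}. setarr (\<lambda>a. if a \<in> A then 1 else 0) i
       = sumset (setarr g i) (setarr h i)" unfolding mdivisor_def by blast
  from hh assms(1) have "setarr (\<lambda>a. if a \<in> A then 1 else 0) 1 = sumset (setarr g 1) (setarr h 1)"
    by auto
  moreover have "setarr (\<lambda>a. if a \<in> A then 1 else 0) 1 = A" by (auto simp: setarr_def)
  moreover have "setarr g 1 = {a. g a \<noteq> 0}" by (auto simp: setarr_def)
  ultimately have "set_divisor {a. g a \<noteq> 0} A" unfolding set_divisor_def by metis
  moreover have "\<forall>a. g a \<le> b" using m unfolding mdivisor_def Mb_def by blast
  ultimately show "(\<forall>a. g a \<le> b) \<and> set_divisor {a. g a \<noteq> 0} A" by blast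
next
  assume r: "(\<forall>a. g a \<le> b) \<and> set_divisor {a. g a \<noteq> 0} A"
  then obtain C where C: "sumset {a. g a \<noteq> 0} C = A" unfolding set_divisor_def by blast
  have fB: "finite {a. g a \<noteq> 0}" using divisor_bound(1)[OF C assms(2,3)] finite_subset by blast
  have fC: "finite C" using divisor_bound(2)[OF C assms(2,3)] finite_subset by blast
  define h where "h = (\<lambda>a. if a \<in> C then 1 else (0::nat))"
  have hM: "h \<in> Mb b" using fC assms(1) by (auto simp: Mb_def h_def)
  have gM: "g \<in> Mb b" using fB r by (auto simp: Mb_def)
  have "\<forall>i \<in> {1..b}. setarr (\<lambda>a. if a \<in> A then 1 else 0) i = sumset (setarr g i) (setarr h i)"
  proof
    fix i assume i: "i \<in> {1..b}"
    show "setarr (\<lambda>a. if a \<in> A then 1 else 0) i = sumset (setarr g i) (setarr h i)"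
    proof (cases "i = 1")
      case True
      have "setarr (\<lambda>a. if a \<in> A then 1 else 0) 1 = A" by (auto simp: setarr_def)
      moreover have "setarr g 1 = {a. g a \<noteq> 0}" by (auto simp: setarr_def)
      moreover have "setarr h 1 = C" by (auto simp: setarr_def h_def)
      ultimately show ?thesis using True C by simp
    next
      case False
      then have "i \<ge> 2" using i by auto
      then have "setarr (\<lambda>a. if a \<in> A then 1 else 0) i = {}" "setarr h i = {}"
        by (auto simp: setarr_def h_def)
      then show ?thesis by simp
    qed
  qed
  then show "mdivisor b g (\<lambda>a. if a \<in> A then 1 else 0)"
    unfolding mdivisor_def using hM gM by blast
qed

lemma card_S:
  assumes "finite B"
  shows "card {g::nat\<Rightarrow>nat. {a. g a \<noteq> 0} = B \<and> (\<forall>a. g a \<le> b)} = b ^ card B"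
proof -
  define E where "E = (\<lambda>k (x::nat). if x \<in> B then k x else (0::nat))"
  have eq: "{g::nat\<Rightarrow>nat. {a. g a \<noteq> 0} = B \<and> (\<forall>a. g a \<le> b)} = E ` (B \<rightarrow>\<^sub>E {1..b})"
  proof (rule set_eqI, rule iffI)
    fix g assume g: "g \<in> {g::nat\<Rightarrow>nat. {a. g a \<noteq> 0} = B \<and> (\<forall>a. g a \<le> b)}"
    have "restrict g B \<in> B \<rightarrow>\<^sub>E {1..b}" using g by auto
    moreover have "g = E (restrict g B)" using g by (auto simp: E_def fun_eq_iff)
    ultimately show "g \<in> E ` (B \<rightarrow>\<^sub>E {1..b})" by blast
  next
    fix g assume "g \<in> E ` (B \<rightarrow>\<^sub>E {1..b})"
    then obtain k where k: "k \<in> B \<rightarrow>\<^sub>E {1..b}" "g = E k" by blast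
    have "{a. g a \<noteq> 0} = B" using k(1) unfolding k(2) E_def by (auto simp: PiE_iff)
    moreover have "\<forall>a. g a \<le> b" using k(1) unfolding k(2) E_def by (auto simp: PiE_iff)
    ultimately show "g \<in> {g::nat\<Rightarrow>nat. {a. g a \<noteq> 0} = B \<and> (\<forall>a. g a \<le> b)}" by blast
  qed
  have inj: "inj_on E (B \<rightarrow>\<^sub>E {1..b})"
  proof (rule inj_onI)
    fix k1 k2 assume k: "k1 \<in> B \<rightarrow>\<^sub>E {1..b}" "k2 \<in> B \<rightarrow>\<^sub>E {1..b}" and e: "E k1 = E k2"
    show "k1 = k2"
    proof (rule PiE_ext[OF k])
      fix x assume "x \<in> B" then show "k1 x = k2 x" using fun_cong[OF e, of x] by (simp add: E_def)
    qed
  qed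
  show ?thesis unfolding eq card_image[OF inj] using card_PiE[OF assms, of "\<lambda>_. {1..b}"]
    by simp
qed

theorem mainTheorem12:
  fixes b :: nat and A :: "nat set"
  assumes "b \<ge> 1" and "finite A" and "A \<noteq> {}"
  shows "num_divisors b (\<lambda>a. if a \<in> A then 1 else 0)
           = (\<Sum>B\<in>{B. set_divisor B A}. b ^ card B)"
proof -
  define S where "S = (\<lambda>B. {g::nat\<Rightarrow>nat. {a. g a \<noteq> 0} = B \<and> (\<forall>a. g a \<le> b)})"
  have fD: "finite {B. set_divisor B A}"
  proof (rule finite_subset)
    show "{B. set_divisor B A} \<subseteq> Pow {..Max A}"
      using divisor_bound(1)[OF _ assms(2,3)] unfolding set_divisor_def by blast
  qed simp
  have fin: "\<forall>B\<in>{B. set_divisor B A}. finite B"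
  proof
    fix B assume "B \<in> {B. set_divisor B A}"
    then obtain C where "sumset B C = A" unfolding set_divisor_def by blast
    from divisor_bound(1)[OF this assms(2,3)] show "finite B" using finite_subset by blast
  qed
  have eq: "{g. mdivisor b g (\<lambda>a. if a \<in> A then 1 else 0)} = (\<Union>B\<in>{B. set_divisor B A}. S B)"
  proof (rule set_eqI)
    fix g
    show "g \<in> {g. mdivisor b g (\<lambda>a. if a \<in> A then 1 else 0)} \<longleftrightarrow> g \<in> (\<Union>B\<in>{B. set_divisor B A}. S B)"
      unfolding mem_Collect_eq mdiv_char[OF assms] UN_iff S_def by blast
  qed
  have fS: "\<forall>B\<in>{B. set_divisor B A}. finite (S B)"
  proof
    fix B assume "B \<in> {B. set_divisor B A}"
    then have "finite B" using fin by blast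
    then have "card (S B) = b ^ card B" unfolding S_def by (rule card_S)
    moreover have "b ^ card B > 0" using assms(1) by simp
    ultimately show "finite (S B)" using card.infinite by fastforce
  qed
  have "card (\<Union>B\<in>{B. set_divisor B A}. S B) = (\<Sum>B\<in>{B. set_divisor B A}. card (S B))"
    by (rule card_UN_disjoint[OF fD fS]) (unfold S_def, blast)
  also have "\<dots> = (\<Sum>B\<in>{B. set_divisor B A}. b ^ card B)"
    using fin card_S unfolding S_def by (intro sum.cong) auto
  finally show ?thesis unfolding num_divisors_def eq .
qed

end
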